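(* Let $D\geq2d+1$ and $0<\delta<\Delta/3$, with the setting and standing assumptions of the context. Let $\mathcal{A}_{2,\delta}$ be the set of $c$ such that $\|c\|<a_{0}$ and $F_{c}(x_{1})\neq F_{c}(\phi_{c}(x_{1}))$ for every $x_{1}\in K$ satisfying $\|x_{1}-\xi_{j}(c)\|\geq3\delta$ for all $j\in\{1,\ldots,m\}$. Then every point of the open ball $\{c:\|c\|<a_{0}\}$ is a Lebesgue point of $\mathcal{A}_{2,\delta}$, and therefore the probability of $\mathcal{A}_{2,\delta}$ relative to this ball is $1$.
   Context: Notation: $\pi_{i}$ is the $i$-th coordinate projection on $\mathbb{R}^{d}$, $\mathbf{e}_{1}=(1,0,\ldots,0)$; for $\alpha\in\mathbb{Z}_{\geq0}^{d}$, $p_{\alpha}(x)=\prod_i(\pi_{i}x)^{\alpha_{i}}$; $\mathcal{I}_{2D-1}$ is the set of $\alpha$ with $|\alpha|\leq2D-1$, of cardinality $D_{\alpha}$; $c=(c_{\alpha})\in\mathbb{R}^{D_{\alpha}}$ with Euclidean norm. $\phi:\mathbb{R}^{d}\to\mathbb{R}^{d}$ is a diffeomorphism, $\phi_{c}(x)=\phi(x)+\mathbf{e}_{1}\sum_{\alpha}c_{\alpha}p_{\alpha}(x)$, and $F_{c}(x)=(\pi_{1}x,\pi_{1}\phi_{c}(x),\ldots,\pi_{1}\phi_{c}^{D-1}(x))$. Standing assumptions: $K$ is a compact ball centered at the origin, $K^{+}\supset K$ a larger compact ball with $\phi^{j}(x)\in K^{+}$ for $x\in K$, $0\leq j\leq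 D-1$; $a_{0}>0$ is such that $\phi_{c}^{j}(x)\in K^{+}$ for $x\in K$, $0\leq j\leq D-1$, $\|c\|\leq a_{0}$; and for all $\|c\|\leq a_{0}$: $\phi_{c}$ is a $C^{3}$ diffeomorphism; $\phi_{c}$ has exactly $m$ fixed points $\xi_{1}(c),\ldots,\xi_{m}(c)$ (labelled consistently in $c$); no other periodic points of period $<2D$; all fixed points hyperbolic with $\pi_{1}\xi_{i}(c)\neq\pi_{1}\xi_{j}(c)$ for $i\neq j$; $F_{c}$ immersive at each fixed point. $\Delta$ is the minimum distance between distinct fixed points of $\phi_{c}$ lying in $K$, over $\|c\|\leq a_{0}$. A point $\mathfrak{a}$ is a Lebesgue point of a measurable set $A$ if $\mu(A\cap B_{\epsilon}(\mathfrak{a}))/\mu(B_{\epsilon}(\mathfrak{a}))\to1$ as $\epsilon\to0$ ($B_\epsilon$ open ball, $\mu$ Lebesgue measure); probability of $A$ relative to $B$ is $\mu(A\cap B)/\mu(B)$. *)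

theory Defs
  imports "HOL-Analysis.Analysis"
begin

text \<open>R^d is modelled as (real,'n) vec with a well-ordered finite index type; the first
coordinate is the least index.\<close>

definition first_idx :: "'n::{finite,wellorder}" where
  "first_idx = (LEAST i. True)"

definition proj1 :: "(real,'n::{finite,wellorder}) vec \<Rightarrow> real" where
  "proj1 x = x $ first_idx"

definition e1 :: "(real,'n::{finite,wellorder}) vec" where
  "e1 = axis first_idx 1"

definition multi_idx :: "nat \<Rightarrow> (('n::finite) \<Rightarrow> nat) set" where
  "multi_idx k = {\<alpha>. (\<Sum>i\<in>UNIV. \<alpha> i) \<le> k}"

definition monom :: "('n::finite \<Rightarrow> nat) \<Rightarrow> (real,'n) vec \<Rightarrow> real" where
  "monom \<alpha> x = (\<Prod>i\<in>UNIV. (x $ i) ^ (\<alpha> i))"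

text \<open>Parameter vectors c in R^{D_alpha} are functions on I_{2D-1}, extensional
(undefined outside); the Euclidean norm:\<close>

definition cnorm :: "'a set \<Rightarrow> ('a \<Rightarrow> real) \<Rightarrow> real" where
  "cnorm I c = sqrt (\<Sum>\<alpha>\<in>I. (c \<alpha>)\<^sup>2)"

definition param_space :: "nat \<Rightarrow> ((('n::finite) \<Rightarrow> nat) \<Rightarrow> real) set" where
  "param_space D = PiE (multi_idx (2*D-1)) (\<lambda>_. UNIV)"

definition leb_param :: "nat \<Rightarrow> ((('n::finite) \<Rightarrow> nat) \<Rightarrow> real) measure" where
  "leb_param D = completion (PiM (multi_idx (2*D-1)) (\<lambda>_. lborel))"

definition cball_open :: "nat \<Rightarrow> ((('n::finite) \<Rightarrow> nat) \<Rightarrow> real) \<Rightarrow> real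
     \<Rightarrow> ((('n::finite) \<Rightarrow> nat) \<Rightarrow> real) set" where
  "cball_open D a \<epsilon> = {c \<in> param_space D. cnorm (multi_idx (2*D-1)) (\<lambda>\<alpha>. c \<alpha> - a \<alpha>) < \<epsilon>}"

definition lebesgue_point :: "nat \<Rightarrow> ((('n::finite) \<Rightarrow> nat) \<Rightarrow> real) set
     \<Rightarrow> ((('n::finite) \<Rightarrow> nat) \<Rightarrow> real) \<Rightarrow> bool" where
  "lebesgue_point D A a \<longleftrightarrow>
     ((\<lambda>\<epsilon>. measure (leb_param D) (A \<inter> cball_open D a \<epsilon>) / measure (leb_param D) (cball_open D a \<epsilon>))
        \<longlongrightarrow> 1) (at_right 0)"

definition rel_prob :: "nat \<Rightarrow> ((('n::finite) \<Rightarrow> nat) \<Rightarrow> real) set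
     \<Rightarrow> ((('n::finite) \<Rightarrow> nat) \<Rightarrow> real) set \<Rightarrow> real" where
  "rel_prob D A B = measure (leb_param D) (A \<inter> B) / measure (leb_param D) B"

definition phi_c :: "nat \<Rightarrow> ((real,'n::{finite,wellorder}) vec \<Rightarrow> (real,'n) vec) \<Rightarrow> (('n \<Rightarrow> nat) \<Rightarrow> real)
     \<Rightarrow> (real,'n) vec \<Rightarrow> (real,'n) vec" where
  "phi_c D \<phi> c x = \<phi> x + (\<Sum>\<alpha>\<in>multi_idx (2*D-1). c \<alpha> * monom \<alpha> x) *\<^sub>R e1"

definition delay_map :: "nat \<Rightarrow> ((real,'n::{finite,wellorder}) vec \<Rightarrow> (real,'n) vec) \<Rightarrow> (('n \<Rightarrow> nat) \<Rightarrow> real)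
     \<Rightarrow> (real,'n) vec \<Rightarrow> real list" where
  "delay_map D \<phi> c x = map (\<lambda>j. proj1 ((phi_c D \<phi> c ^^ j) x)) [0..<D]"

fun Ck :: "nat \<Rightarrow> ('a::euclidean_space \<Rightarrow> 'b::real_normed_vector) \<Rightarrow> bool" where
  "Ck 0 f = continuous_on UNIV f"
| "Ck (Suc k) f = ((\<forall>x. f differentiable (at x)) \<and>
      (\<forall>b\<in>Basis. Ck k (\<lambda>x. frechet_derivative f (at x) b)))"

definition diffeo_Ck :: "nat \<Rightarrow> ('a::euclidean_space \<Rightarrow> 'a) \<Rightarrow> bool" where
  "diffeo_Ck k f \<longleftrightarrow> bij f \<and> Ck k f \<and> Ck k (inv f)"

definition hyperbolic_fp :: "((real,'n::finite) vec \<Rightarrow> (real,'n) vec) \<Rightarrow> (real,'n) vec \<Rightarrow> bool" where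
  "hyperbolic_fp f p \<longleftrightarrow> f p = p \<and> f differentiable (at p) \<and>
     (\<forall>z::complex. cmod z = 1 \<longrightarrow>
        det (\<chi> i j. complex_of_real (matrix (frechet_derivative f (at p)) $ i $ j)
                    - (if i = j then z else 0)) \<noteq> 0)"

definition immersive_at :: "nat \<Rightarrow> ((real,'n::{finite,wellorder}) vec \<Rightarrow> (real,'n) vec) \<Rightarrow> (('n \<Rightarrow> nat) \<Rightarrow> real)
     \<Rightarrow> (real,'n) vec \<Rightarrow> bool" where
  "immersive_at D \<phi> c p \<longleftrightarrow>
     (\<forall>j<D. (\<lambda>x. proj1 ((phi_c D \<phi> c ^^ j) x)) differentiable (at p)) \<and>
     (\<forall>v. (\<forall>j<D. frechet_derivative (\<lambda>x. proj1 ((phi_c D \<phi> c ^^ j) x)) (at p) v = 0) \<longrightarrow> v = 0)"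

text \<open>Delta: minimum distance between distinct fixed points lying in K, over all
parameters with norm at most a0 (as an extended real; +infinity if there are no such pairs).\<close>

definition fp_min_dist :: "nat \<Rightarrow> real \<Rightarrow> ((real,'n::finite) vec) set \<Rightarrow> nat
     \<Rightarrow> (nat \<Rightarrow> (('n \<Rightarrow> nat) \<Rightarrow> real) \<Rightarrow> (real,'n) vec) \<Rightarrow> ereal" where
  "fp_min_dist D a0 K m \<xi> = Inf {ereal (dist (\<xi> i c) (\<xi> j c)) | i j c.
      i \<in> {1..m} \<and> j \<in> {1..m} \<and> \<xi> i c \<noteq> \<xi> j c \<and> \<xi> i c \<in> K \<and> \<xi> j c \<in> K \<and>
      c \<in> param_space D \<and> cnorm (multi_idx (2*D-1)) c \<le> a0}"

end

theory Submission
  imports Defs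
begin


definition polyrep :: "nat \<Rightarrow> ((real,'n::finite) vec \<Rightarrow> real) \<Rightarrow> bool" where
  "polyrep k f \<longleftrightarrow> (\<exists>c. \<forall>x. f x = (\<Sum>\<alpha>\<in>multi_idx k. c \<alpha> * monom \<alpha> x))"

lemma finite_multi_idx: "finite (multi_idx k :: ('n::finite \<Rightarrow> nat) set)"
proof -
  have "multi_idx k \<subseteq> PiE (UNIV::'n set) (\<lambda>_. {0..k})"
  proof
    fix \<alpha> :: "'n \<Rightarrow> nat" assume "\<alpha> \<in> multi_idx k"
    then have s: "(\<Sum>i\<in>UNIV. \<alpha> i) \<le> k" by (simp add: multi_idx_def)
    have "\<alpha> i \<le> k" for i using member_le_sum[of i UNIV \<alpha>] s by simp
    then show "\<alpha> \<in> PiE UNIV (\<lambda>_. {0..k})" by auto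
  qed
  then show ?thesis by (rule finite_subset) (simp add: finite_PiE)
qed

lemma multi_idx_mono: "k \<le> k' \<Longrightarrow> multi_idx k \<subseteq> multi_idx k'"
  by (auto simp: multi_idx_def)

lemma polyrep_mono: assumes "polyrep k f" "k \<le> k'" shows "polyrep k' f"
proof -
  obtain c where c: "\<And>x. f x = (\<Sum>\<alpha>\<in>multi_idx k. c \<alpha> * monom \<alpha> x)" using assms unfolding polyrep_def by blast
  define c' where "c' \<alpha> = (if \<alpha> \<in> multi_idx k then c \<alpha> else 0)" for \<alpha>
  have "f x = (\<Sum>\<alpha>\<in>multi_idx k'. c' \<alpha> * monom \<alpha> x)" for x
  proof -
    have "(\<Sum>\<alpha>\<in>multi_idx k'. c' \<alpha> * monom \<alpha> x) = (\<Sum>\<alpha>\<in>multi_idx k. c' \<alpha> * monom \<alpha> x)"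
      by (rule sum.mono_neutral_right) (auto simp: finite_multi_idx multi_idx_mono[OF assms(2)] c'_def)
    then show ?thesis by (simp add: c c'_def)
  qed
  then show ?thesis unfolding polyrep_def by blast
qed

lemma polyrep_add: assumes "polyrep k f" "polyrep k g" shows "polyrep k (\<lambda>x. f x + g x)"
proof -
  obtain c where c: "\<And>x. f x = (\<Sum>\<alpha>\<in>multi_idx k. c \<alpha> * monom \<alpha> x)" using assms unfolding polyrep_def by blast
  obtain d where d: "\<And>x. g x = (\<Sum>\<alpha>\<in>multi_idx k. d \<alpha> * monom \<alpha> x)" using assms unfolding polyrep_def by blast
  show ?thesis unfolding polyrep_def
    by (intro exI[of _ "\<lambda>\<alpha>. c \<alpha> + d \<alpha>"] allI) (simp add: c d distrib_right sum.distrib)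
qed

lemma polyrep_scale: assumes "polyrep k f" shows "polyrep k (\<lambda>x. a * f x)"
proof -
  obtain c where c: "\<And>x. f x = (\<Sum>\<alpha>\<in>multi_idx k. c \<alpha> * monom \<alpha> x)" using assms unfolding polyrep_def by blast
  show ?thesis unfolding polyrep_def
    by (intro exI[of _ "\<lambda>\<alpha>. a * c \<alpha>"] allI) (simp add: c sum_distrib_left mult.assoc)
qed

lemma polyrep_const: "polyrep k (\<lambda>x::(real,'a::finite) vec. a)"
proof -
  have z: "(\<lambda>_. 0::nat) \<in> (multi_idx k :: ('a \<Rightarrow> nat) set)" by (simp add: multi_idx_def)
  define c where "c \<alpha> = (if \<alpha> = (\<lambda>_. 0::nat) then a else 0)" for \<alpha> :: "'a \<Rightarrow> nat"
  have cs: "(\<Sum>\<alpha>\<in>multi_idx k. c \<alpha> * monom \<alpha> (x::(real,'a::finite) vec)) = a" for x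
  proof -
    have "c \<alpha> * monom \<alpha> x = (if \<alpha> = (\<lambda>_. 0::nat) then a else 0)" for \<alpha>
      by (simp add: c_def monom_def)
    then show ?thesis using z by (simp add: finite_multi_idx)
  qed
  show ?thesis unfolding polyrep_def by (rule exI[of _ c]) (simp add: cs)
qed

lemma monom_shift: "monom (\<lambda>j. \<alpha> j + (if j = i then 1 else 0)) x = monom \<alpha> x * x $ i"
proof -
  have "monom (\<lambda>j. \<alpha> j + (if j = i then 1 else 0)) x = (\<Prod>j\<in>UNIV. (x$j)^(\<alpha> j) * (x$j)^(if j = i then 1 else 0))"
    by (simp add: monom_def power_add)
  also have "\<dots> = monom \<alpha> x * (\<Prod>j\<in>UNIV. (x$j)^(if j = i then 1 else 0))"
    by (simp add: prod.distrib monom_def)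
  also have "(\<Prod>j\<in>UNIV. (x$j)^(if j = i then 1 else 0)) = x $ i"
    by (simp add: if_distrib prod.If_cases)
  finally show ?thesis .
qed

lemma polyrep_times_coord: assumes "polyrep k f" shows "polyrep (Suc k) (\<lambda>x. f x * x $ i)"
proof -
  obtain c where c: "\<And>x. f x = (\<Sum>\<alpha>\<in>multi_idx k. c \<alpha> * monom \<alpha> x)" using assms unfolding polyrep_def by blast
  define sh where "sh \<alpha> = (\<lambda>j. \<alpha> j + (if j = i then 1 else 0::nat))" for \<alpha> :: "'a \<Rightarrow> nat"
  have inj: "inj sh" unfolding inj_def sh_def fun_eq_iff by simp
  define c' where "c' \<gamma> = (if \<gamma> \<in> sh ` multi_idx k then c (inv sh \<gamma>) else 0)" for \<gamma>
  have sub: "sh ` multi_idx k \<subseteq> multi_idx (Suc k)"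
  proof
    fix \<gamma> assume "\<gamma> \<in> sh ` multi_idx k"
    then obtain \<alpha> where a: "\<alpha> \<in> multi_idx k" "\<gamma> = sh \<alpha>" by blast
    have "(\<Sum>j\<in>UNIV. sh \<alpha> j) = (\<Sum>j\<in>UNIV. \<alpha> j) + 1"
      by (simp add: sh_def sum.distrib)
    then show "\<gamma> \<in> multi_idx (Suc k)" using a by (simp add: multi_idx_def)
  qed
  have "f x * x $ i = (\<Sum>\<gamma>\<in>multi_idx (Suc k). c' \<gamma> * monom \<gamma> x)" for x
  proof -
    have "f x * x $ i = (\<Sum>\<alpha>\<in>multi_idx k. c \<alpha> * monom (sh \<alpha>) x)"
      by (simp add: c sum_distrib_right sh_def monom_shift mult.assoc)
    also have "\<dots> = (\<Sum>\<gamma>\<in>sh ` multi_idx k. c' \<gamma> * monom \<gamma> x)"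
      by (simp add: sum.reindex[OF inj_on_subset[OF inj]] c'_def inv_f_f[OF inj])
    also have "\<dots> = (\<Sum>\<gamma>\<in>multi_idx (Suc k). c' \<gamma> * monom \<gamma> x)"
      by (rule sum.mono_neutral_left) (simp_all add: finite_multi_idx sub c'_def)
    finally show ?thesis .
  qed
  then show ?thesis unfolding polyrep_def by blast
qed

lemma polyrep_prod:
  fixes S :: "'k set"
  assumes "finite S"
  shows "polyrep (card S) (\<lambda>x::(real,'n::finite) vec. \<Prod>k\<in>S. (x $ \<iota> k - a k) * s k)"
  using assms
proof (induction S rule: finite_induct)
  case empty
  then show ?case using polyrep_const[of 0 1] by simp
next
  case (insert k S)
  let ?f = "\<lambda>x::(real,'n) vec. \<Prod>k\<in>S. (x $ \<iota> k - a k) * s k"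
  have "polyrep (Suc (card S)) (\<lambda>x. s k * (?f x * x $ \<iota> k) + (- s k * a k) * ?f x)"
    by (intro polyrep_add polyrep_scale polyrep_times_coord polyrep_mono[OF insert.IH]) auto
  moreover have "(\<lambda>x. s k * (?f x * x $ \<iota> k) + (- s k * a k) * ?f x) = (\<lambda>x. \<Prod>k\<in>insert k S. (x $ \<iota> k - a k) * s k)"
    using insert by (auto simp: algebra_simps)
  ultimately show ?case using insert by simp
qed



lemma lagrange_exists:
  fixes z :: "'k::finite \<Rightarrow> (real,'n::finite) vec"
  assumes injz: "inj z" and card: "CARD('k) \<le> Suc K"
  shows "\<exists>c. \<forall>j. (\<Sum>\<alpha>\<in>multi_idx K. c \<alpha> * monom \<alpha> (z j)) = (if j = j0 then 1 else 0)"
proof -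
  have "\<exists>i. z j0 $ i \<noteq> z k $ i" if "k \<noteq> j0" for k
    using injz that by (metis inj_eq vec_eq_iff)
  then obtain \<iota> where \<iota>: "\<And>k. k \<noteq> j0 \<Longrightarrow> z j0 $ \<iota> k \<noteq> z k $ \<iota> k" by metis
  define S where "S = UNIV - {j0}"
  let ?L = "\<lambda>x::(real,'n) vec. \<Prod>k\<in>S. (x $ \<iota> k - z k $ \<iota> k) * (1 / (z j0 $ \<iota> k - z k $ \<iota> k))"
  have "polyrep (card S) ?L" by (rule polyrep_prod) (simp add: S_def)
  moreover have "card S \<le> K" using card by (simp add: S_def card_Diff_singleton)
  ultimately have "polyrep K ?L" by (rule polyrep_mono)
  then obtain c where c: "\<And>x. ?L x = (\<Sum>\<alpha>\<in>multi_idx K. c \<alpha> * monom \<alpha> x)" unfolding polyrep_def by blast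
  have "?L (z j) = (if j = j0 then 1 else 0)" for j
  proof (cases "j = j0")
    case True
    then show ?thesis using \<iota> by (auto simp: S_def intro!: prod.neutral)
  next
    case False
    then have "j \<in> S" by (simp add: S_def)
    then show ?thesis using False by (auto intro!: prod_zero[of S])
  qed
  then show ?thesis using c by metis
qed

lemma span_cols_det:
  fixes col :: "'a \<Rightarrow> real^'k::finite"
  assumes fin: "finite I" and ax: "\<And>j. axis j 1 \<in> span (col ` I)"
  shows "\<exists>\<sigma>. (\<forall>k. \<sigma> k \<in> I) \<and> inj \<sigma> \<and> det (\<chi> j k. col (\<sigma> k) $ j) \<noteq> 0"
proof -
  have "Basis \<subseteq> span (col ` I)"
    using ax by (auto simp: Basis_vec_def Basis_real_def)
  then have spanU: "span (col ` I) = UNIV"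
    by (metis span_Basis span_minimal subspace_span top.extremum_uniqueI)
  obtain B where B: "B \<subseteq> col ` I" "independent B" "col ` I \<subseteq> span B"
    using maximal_independent_subset by blast
  have spanB: "span B = UNIV"
    using B spanU by (metis span_minimal subspace_span top.extremum_uniqueI)
  have finB: "finite B" using B(1) fin by (meson finite_imageI finite_subset)
  have cardB: "card B = CARD('k)"
    using basis_card_eq_dim[of B UNIV] B spanB by simp
  obtain e where e: "bij_betw e (UNIV::'k set) B"
    using finite_same_card_bij[of "UNIV::'k set" B] finB cardB by auto
  have ex: "\<exists>\<alpha>. \<alpha> \<in> I \<and> col \<alpha> = e k" for k
    using e B(1) unfolding bij_betw_def by (metis image_iff rangeI subsetD)
  define \<sigma> where "\<sigma> k = (SOME \<alpha>. \<alpha> \<in> I \<and> col \<alpha> = e k)" for k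
  have \<sigma>: "\<sigma> k \<in> I" "col (\<sigma> k) = e k" for k
    using someI_ex[OF ex[of k]] by (auto simp: \<sigma>_def)
  have inj: "inj \<sigma>"
    using e \<sigma>(2) by (metis bij_betw_def inj_def)
  define A where "A = (\<chi> j k. col (\<sigma> k) $ j)"
  have colA: "column k A = e k" for k
    by (simp add: A_def column_def \<sigma>(2) vec_eq_iff)
  have "\<forall>c. sum (\<lambda>i. c i *s column i A) (UNIV :: 'k set) = 0 \<longrightarrow> (\<forall>i. c i = 0)"
  proof (rule allI, rule impI)
    fix c :: "'k \<Rightarrow> real"
    assume h: "sum (\<lambda>i. c i *s column i A) UNIV = 0"
    define u where "u b = c (inv_into UNIV e b)" for b
    have "(\<Sum>b\<in>B. u b *\<^sub>R b) = (\<Sum>i\<in>UNIV. u (e i) *\<^sub>R e i)"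
      using e unfolding bij_betw_def by (metis (no_types, lifting) sum.reindex_cong)
    also have "\<dots> = sum (\<lambda>i. c i *s column i A) UNIV"
      using e by (simp add: u_def colA scalar_mult_eq_scaleR bij_betw_def inv_into_f_f)
    finally have "(\<Sum>b\<in>B. u b *\<^sub>R b) = 0" using h by simp
    then have "\<forall>b\<in>B. u b = 0"
      using B(2) finB independent_explicit by blast
    then show "\<forall>i. c i = 0"
      using e by (auto simp: u_def bij_betw_def inv_into_f_f)
  qed
  then have "invertible A"
    by (simp add: invertible_left_inverse matrix_left_invertible_independent_columns)
  then have "det A \<noteq> 0" by (simp add: invertible_det_nz)
  then show ?thesis using \<sigma>(1) inj unfolding A_def by blast
qed



lemma psf_lborel: "product_sigma_finite (\<lambda>_::'a. lborel)"
  by (simp add: product_sigma_finite_def lborel.sigma_finite_measure_axioms)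

lemma PiM_transfer:
  fixes \<beta> :: "'a \<Rightarrow> 'k::euclidean_space"
  assumes finJ: "finite J" and bij: "bij_betw \<beta> J Basis"
    and S: "S \<in> sets (PiM J (\<lambda>_. lborel))"
  shows "emeasure (PiM J (\<lambda>_. lborel)) S = emeasure lborel {v. (\<lambda>\<alpha>\<in>J. v \<bullet> \<beta> \<alpha>) \<in> S}"
proof -
  interpret PJ: product_sigma_finite "\<lambda>_::'a. lborel" by (rule psf_lborel)
  interpret PB: product_sigma_finite "\<lambda>_::'k. lborel" by (rule psf_lborel)
  define R where "R f = (\<lambda>\<alpha>\<in>J. f (\<beta> \<alpha>))" for f :: "'k \<Rightarrow> real"
  define R' where "R' v = (\<lambda>\<alpha>\<in>J. v \<bullet> \<beta> \<alpha>)" for v :: 'k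
  define E where "E f = (\<Sum>b\<in>Basis. f b *\<^sub>R b)" for f :: "'k \<Rightarrow> real"
  have \<beta>B: "\<beta> \<alpha> \<in> Basis" if "\<alpha> \<in> J" for \<alpha> using bij that by (auto simp: bij_betw_def)
  have Rm: "R \<in> measurable (PiM Basis (\<lambda>_. lborel)) (PiM J (\<lambda>_. lborel))"
    unfolding R_def by (rule measurable_restrict) (metis \<beta>B measurable_component_singleton measurable_lborel1)
  have R'm: "R' \<in> measurable borel (PiM J (\<lambda>_. lborel))"
    unfolding R'_def by (rule measurable_restrict) auto
  have step1: "distr (PiM Basis (\<lambda>_. lborel)) (PiM J (\<lambda>_. lborel)) R = PiM J (\<lambda>_. lborel)"
  proof (rule PJ.PiM_eqI[OF finJ])
    show "sets (distr (PiM Basis (\<lambda>_. lborel)) (PiM J (\<lambda>_. lborel)) R) = sets (PiM J (\<lambda>_. lborel))"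
      by simp
    fix A :: "'a \<Rightarrow> real set" assume A: "\<And>i. i \<in> J \<Longrightarrow> A i \<in> sets lborel"
    have pre: "R -` PiE J A \<inter> space (PiM Basis (\<lambda>_. lborel)) = PiE Basis (\<lambda>b. A (inv_into J \<beta> b))"
    proof (intro set_eqI iffI)
      fix f assume "f \<in> R -` PiE J A \<inter> space (PiM Basis (\<lambda>_. lborel))"
      then have f1: "R f \<in> PiE J A" and f2: "f \<in> extensional Basis" by (auto simp: space_PiM PiE_iff)
      have "f b \<in> A (inv_into J \<beta> b)" if b: "b \<in> Basis" for b
      proof -
        have a: "inv_into J \<beta> b \<in> J" "\<beta> (inv_into J \<beta> b) = b"
          using bij b by (auto simp: bij_betw_def inv_into_into f_inv_into_f)
        have "R f (inv_into J \<beta> b) \<in> A (inv_into J \<beta> b)" using f1 a(1) by (auto simp: PiE_iff)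
        then show ?thesis using a by (simp add: R_def)
      qed
      then show "f \<in> PiE Basis (\<lambda>b. A (inv_into J \<beta> b))" using f2 by (auto simp: PiE_iff)
    next
      fix f assume "f \<in> PiE Basis (\<lambda>b. A (inv_into J \<beta> b))"
      then have f1: "\<And>b. b \<in> Basis \<Longrightarrow> f b \<in> A (inv_into J \<beta> b)" and f2: "f \<in> extensional Basis"
        by (auto simp: PiE_iff)
      have "f (\<beta> \<alpha>) \<in> A \<alpha>" if "\<alpha> \<in> J" for \<alpha>
        using f1[OF \<beta>B[OF that]] bij that by (simp add: bij_betw_def inv_into_f_f)
      then have "R f \<in> PiE J A" by (simp add: R_def PiE_iff)
      moreover have "f \<in> space (PiM Basis (\<lambda>_. lborel))" using f2 by (simp add: space_PiM PiE_iff)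
      ultimately show "f \<in> R -` PiE J A \<inter> space (PiM Basis (\<lambda>_. lborel))" by simp
    qed
    have "emeasure (distr (PiM Basis (\<lambda>_. lborel)) (PiM J (\<lambda>_. lborel)) R) (PiE J A)
        = emeasure (PiM Basis (\<lambda>_. lborel)) (PiE Basis (\<lambda>b. A (inv_into J \<beta> b)))"
      using A finJ by (subst emeasure_distr[OF Rm]) (auto intro!: sets_PiM_I_finite simp: pre[symmetric])
    also have "\<dots> = (\<Prod>b\<in>Basis. emeasure lborel (A (inv_into J \<beta> b)))"
      using A bij by (intro PB.emeasure_PiM) (auto simp: bij_betw_def inv_into_into)
    also have "\<dots> = (\<Prod>\<alpha>\<in>J. emeasure lborel (A \<alpha>))"
      using bij by (intro prod.reindex_bij_betw[symmetric, where h=\<beta>, THEN trans]) (auto simp: bij_betw_def inv_into_f_f intro!: prod.cong)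
    finally show "emeasure (distr (PiM Basis (\<lambda>_. lborel)) (PiM J (\<lambda>_. lborel)) R) (PiE J A) = (\<Prod>\<alpha>\<in>J. emeasure lborel (A \<alpha>))" .
  qed
  have X: "{v. R' v \<in> S} \<in> sets borel"
    using measurable_sets[OF R'm S] by (simp add: vimage_def)
  have RE: "R' (E f) = R f" if "f \<in> space (PiM Basis (\<lambda>_. lborel))" for f
  proof -
    have "E f \<bullet> \<beta> \<alpha> = f (\<beta> \<alpha>)" if "\<alpha> \<in> J" for \<alpha>
      using \<beta>B[OF that] by (simp add: E_def inner_sum_left inner_Basis if_distrib sum.delta cong: if_cong)
    then show ?thesis by (auto simp: R'_def R_def)
  qed
  have "emeasure lborel {v. R' v \<in> S} = emeasure (PiM Basis (\<lambda>_. lborel)) (E -` {v. R' v \<in> S} \<inter> space (PiM Basis (\<lambda>_. lborel)))"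
    using X by (subst lborel_eq) (simp add: emeasure_distr E_def)
  also have "E -` {v. R' v \<in> S} \<inter> space (PiM Basis (\<lambda>_. lborel)) = R -` S \<inter> space (PiM Basis (\<lambda>_. lborel))"
    using RE by auto
  also have "emeasure (PiM Basis (\<lambda>_. lborel)) \<dots> = emeasure (distr (PiM Basis (\<lambda>_. lborel)) (PiM J (\<lambda>_. lborel)) R) S"
    using S by (simp add: emeasure_distr[OF Rm])
  also have "\<dots> = emeasure (PiM J (\<lambda>_. lborel)) S" by (simp add: step1)
  finally show ?thesis unfolding R'_def by (rule sym)
qed



lemma differentiable_prod_at:
  fixes f :: "'i \<Rightarrow> 'm::real_normed_vector \<Rightarrow> real"
  assumes "\<And>i. i \<in> S \<Longrightarrow> f i differentiable (at x)"
  shows "(\<lambda>x. \<Prod>i\<in>S. f i x) differentiable (at x)"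
proof (cases "finite S")
  case True
  then show ?thesis using assms
    by (induction S rule: finite_induct) auto
qed simp

lemma det_differentiable:
  fixes F :: "'k::finite \<Rightarrow> 'k \<Rightarrow> 'm::real_normed_vector \<Rightarrow> real"
  assumes "\<And>i j. F i j differentiable (at x)"
  shows "(\<lambda>x. det (\<chi> i j. F i j x)) differentiable (at x)"
proof -
  have "(\<lambda>x. \<Sum>p\<in>{p. p permutes (UNIV::'k set)}. of_int (sign p) * (\<Prod>i\<in>UNIV. F i (p i) x)) differentiable (at x)"
    using assms by (intro differentiable_sum differentiable_mult differentiable_const differentiable_prod_at ballI)
       (auto simp: finite_permutations)
  then show ?thesis by (simp add: det_def)
qed

locale core_setup =
  fixes G :: "'k::finite \<Rightarrow> 'a \<Rightarrow> 'm::euclidean_space \<Rightarrow> real"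
    and bb :: "'k \<Rightarrow> 'm \<Rightarrow> real"
    and I :: "'a set"
  assumes finI: "finite I"
    and dimlt: "DIM('m) < CARD('k)"
    and Gd: "\<And>j \<alpha> x. G j \<alpha> differentiable (at x)"
    and bd: "\<And>j x. bb j differentiable (at x)"
begin

definition gg :: "'m \<Rightarrow> ('a \<Rightarrow> real) \<Rightarrow> real" where
  "gg q c = (\<Sum>j\<in>UNIV. \<bar>(\<Sum>\<alpha>\<in>I. c \<alpha> * G j \<alpha> q) - bb j q\<bar>)"

definition Mat :: "('k \<Rightarrow> 'a) \<Rightarrow> 'm \<Rightarrow> real^'k^'k" where
  "Mat \<sigma> x = (\<chi> j k. G j (\<sigma> k) x)"

lemma G_cont: "isCont (G j \<alpha>) x"
  using Gd differentiable_imp_continuous_within by blast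

lemma bb_cont: "isCont (bb j) x"
  using bd differentiable_imp_continuous_within by blast

lemma gg_cont: "continuous_on UNIV (\<lambda>q. gg q c)"
  unfolding gg_def
  by (intro continuous_at_imp_continuous_on ballI continuous_intros G_cont bb_cont)

lemma gg_nonneg: "gg q c \<ge> 0"
  unfolding gg_def by (simp add: sum_nonneg)

lemma gg_zero_iff: "gg q c = 0 \<longleftrightarrow> (\<forall>j. (\<Sum>\<alpha>\<in>I. c \<alpha> * G j \<alpha> q) = bb j q)"
  unfolding gg_def by (simp add: sum_nonneg_eq_0_iff)

lemma gg_meas: "(\<lambda>c. gg q c) \<in> borel_measurable (PiM I (\<lambda>_. lborel))"
  unfolding gg_def by measurable

lemma det_cont: "continuous_on UNIV (\<lambda>x. det (Mat \<sigma> x))"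
proof -
  have "(\<lambda>x. det (Mat \<sigma> x)) differentiable (at x)" for x
    unfolding Mat_def by (rule det_differentiable) (rule Gd)
  then show ?thesis
    by (intro continuous_at_imp_continuous_on ballI differentiable_imp_continuous_within)
qed

definition NB :: "'m set \<Rightarrow> 'm set \<Rightarrow> ('a \<Rightarrow> real) set" where
  "NB Dn B = {c \<in> PiE I (\<lambda>_. UNIV). \<forall>n::nat. \<exists>q\<in>Dn \<inter> B. gg q c < 1 / real (Suc n)}"

lemma space_L: "space (PiM I (\<lambda>_. lborel)) = PiE I (\<lambda>_. UNIV)"
  by (simp add: space_PiM)

lemma NB_sets:
  assumes "countable Dn"
  shows "NB Dn B \<in> sets (PiM I (\<lambda>_. lborel))"
proof -
  let ?M = "PiM I (\<lambda>_. lborel)"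
  have e: "{c \<in> space ?M. gg q c < t} \<in> sets ?M" for q t
    using gg_meas[of q] by measurable
  have u: "(\<Union>q\<in>Dn \<inter> B. {c \<in> space ?M. gg q c < 1 / real (Suc n)}) \<in> sets ?M" for n
    by (rule sets.countable_UN'') (use assms e in auto)
  have "(\<Inter>n\<in>(UNIV::nat set). (\<Union>q\<in>Dn \<inter> B. {c \<in> space ?M. gg q c < 1 / real (Suc n)})) \<in> sets ?M"
    by (rule sets.countable_INT) (use u in auto)
  moreover have "NB Dn B = space ?M \<inter> (\<Inter>n\<in>(UNIV::nat set). (\<Union>q\<in>Dn \<inter> B. {c \<in> space ?M. gg q c < 1 / real (Suc n)}))"
    unfolding NB_def space_L by auto
  ultimately show ?thesis by simp
qed

lemma NB_sub:
  assumes dense: "\<And>U. open U \<Longrightarrow> U \<noteq> {} \<Longrightarrow> \<exists>d\<in>Dn. d \<in> U"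
    and B: "open B" "x \<in> B" and c: "c \<in> PiE I (\<lambda>_. UNIV)" and z: "gg x c = 0"
  shows "c \<in> NB Dn B"
proof -
  have "\<exists>q\<in>Dn \<inter> B. gg q c < 1 / real (Suc n)" for n
  proof -
    have "open {q. gg q c < 1 / real (Suc n)}"
      by (rule open_Collect_less) (auto intro: gg_cont)
    then have "open (B \<inter> {q. gg q c < 1 / real (Suc n)})" using B by auto
    moreover have "x \<in> B \<inter> {q. gg q c < 1 / real (Suc n)}" using B z by simp
    ultimately obtain d where "d \<in> Dn" "d \<in> B \<inter> {q. gg q c < 1 / real (Suc n)}"
      using dense by blast
    then show ?thesis by blast
  qed
  then show ?thesis using c by (simp add: NB_def)
qed

lemma NB_zero:
  assumes "c \<in> NB Dn (ball x0 r)"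
  shows "\<exists>x\<in>cball x0 r. gg x c = 0"
proof -
  have h: "\<forall>n::nat. \<exists>q\<in>ball x0 r. gg q c < 1 / real (Suc n)"
    using assms by (auto simp: NB_def)
  then obtain q0 where "q0 \<in> ball x0 r" by blast
  then have ne: "cball x0 r \<noteq> {}" using ball_subset_cball by blast
  obtain x where x: "x \<in> cball x0 r" "\<And>y. y \<in> cball x0 r \<Longrightarrow> gg x c \<le> gg y c"
    using continuous_attains_inf[OF compact_cball ne continuous_on_subset[OF gg_cont[of c]]] by auto
  have "gg x c \<le> 0"
  proof (rule ccontr)
    assume "\<not> gg x c \<le> 0"
    then obtain n where n: "inverse (real (Suc n)) < gg x c"
      using reals_Archimedean[of "gg x c"] by force
    obtain q where q: "q \<in> ball x0 r" "gg q c < 1 / real (Suc n)" using h by blast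
    have "gg x c \<le> gg q c" using x(2) q(1) by auto
    then show False using n q(2) by (simp add: inverse_eq_divide)
  qed
  then show ?thesis using x(1) gg_nonneg[of x c] by (intro bexI[of _ x]) auto
qed

lemma NB_null:
  assumes \<sigma>I: "\<And>k. \<sigma> k \<in> I" and inj\<sigma>: "inj \<sigma>"
    and detnz: "\<And>x. x \<in> cball x0 r \<Longrightarrow> det (Mat \<sigma> x) \<noteq> 0"
    and cD: "countable Dn"
  shows "NB Dn (ball x0 r) \<in> null_sets (PiM I (\<lambda>_. lborel))"
proof -
  interpret P: product_sigma_finite "\<lambda>_::'a. lborel" by (rule psf_lborel)
  define J where "J = range \<sigma>"
  define N where "N = NB Dn (ball x0 r)"
  have JI: "J \<subseteq> I" using \<sigma>I by (auto simp: J_def)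
  have finJ: "finite J" by (simp add: J_def)
  have IJ: "(I - J) \<union> J = I" using JI by auto
  have Nsets: "N \<in> sets (PiM I (\<lambda>_. lborel))" unfolding N_def by (rule NB_sets[OF cD])
  define \<beta> where "\<beta> \<alpha> = (axis (inv \<sigma> \<alpha>) 1 :: real^'k)" for \<alpha>
  have \<beta>\<sigma>: "\<beta> (\<sigma> k) = axis k 1" for k by (simp add: \<beta>_def inv_f_f[OF inj\<sigma>])
  have bij: "bij_betw \<beta> J Basis"
  proof (rule bij_betw_imageI)
    show "inj_on \<beta> J"
      unfolding J_def inj_on_def by (auto simp: \<beta>\<sigma> axis_eq_axis)
    show "\<beta> ` J = Basis"
      unfolding J_def by (auto simp: \<beta>\<sigma> Basis_vec_def Basis_real_def image_iff)
  qed
  define rr where "rr w x = (\<chi> j. bb j x - (\<Sum>\<alpha>\<in>I - J. w \<alpha> * G j \<alpha> x))" for w x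
  define h where "h w x = (\<chi> k. det (\<chi> i j. if j = k then rr w x $ i else Mat \<sigma> x $ i $ j) / det (Mat \<sigma> x))" for w x
  have slice0: "emeasure (PiM J (\<lambda>_. lborel)) ((\<lambda>u. merge (I - J) J (w, u)) -` N \<inter> space (PiM J (\<lambda>_. lborel))) = 0"
    if w: "w \<in> space (PiM (I - J) (\<lambda>_. lborel))" for w
  proof -
    define S where "S = (\<lambda>u. merge (I - J) J (w, u)) -` N \<inter> space (PiM J (\<lambda>_. lborel))"
    have mm: "(\<lambda>u. merge (I - J) J (w, u)) \<in> measurable (PiM J (\<lambda>_. lborel)) (PiM ((I - J) \<union> J) (\<lambda>_. lborel))"
      by (rule measurable_compose[OF measurable_Pair1'[OF w] measurable_merge])
    have Ssets: "S \<in> sets (PiM J (\<lambda>_. lborel))"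
      unfolding S_def using measurable_sets[OF mm] Nsets IJ by simp
    define X where "X = {v::real^'k. (\<lambda>\<alpha>\<in>J. v \<bullet> \<beta> \<alpha>) \<in> S}"
    have em: "emeasure (PiM J (\<lambda>_. lborel)) S = emeasure lborel X"
      unfolding X_def by (rule PiM_transfer[OF finJ bij Ssets])
    have R'm: "(\<lambda>v::real^'k. \<lambda>\<alpha>\<in>J. v \<bullet> \<beta> \<alpha>) \<in> measurable borel (PiM J (\<lambda>_. lborel))"
      by (rule measurable_restrict) auto
    have Xsets: "X \<in> sets borel"
      using measurable_sets[OF R'm Ssets] by (simp add: X_def vimage_def)
    have Xsub: "X \<subseteq> h w ` cball x0 r"
    proof
      fix v assume "v \<in> X"
      then have uS: "(\<lambda>\<alpha>\<in>J. v \<bullet> \<beta> \<alpha>) \<in> S" by (simp add: X_def)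
      define c where "c = merge (I - J) J (w, (\<lambda>\<alpha>\<in>J. v \<bullet> \<beta> \<alpha>))"
      have cN: "c \<in> N" using uS by (simp add: S_def c_def)
      then obtain x where x: "x \<in> cball x0 r" "gg x c = 0"
        using NB_zero unfolding N_def by blast
      have eqs: "(\<Sum>\<alpha>\<in>I. c \<alpha> * G j \<alpha> x) = bb j x" for j
        using x(2) gg_zero_iff by blast
      have c\<sigma>: "c (\<sigma> k) = v $ k" for k
        by (simp add: c_def merge_def J_def \<beta>\<sigma> inner_axis)
      have cw: "c \<alpha> = w \<alpha>" if "\<alpha> \<in> I - J" for \<alpha>
        using that by (simp add: c_def merge_def)
      have "Mat \<sigma> x *v v = rr w x"
      proof -
        have "(Mat \<sigma> x *v v) $ j = rr w x $ j" for j
        proof -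
          have "(\<Sum>\<alpha>\<in>I. c \<alpha> * G j \<alpha> x) = (\<Sum>\<alpha>\<in>J. c \<alpha> * G j \<alpha> x) + (\<Sum>\<alpha>\<in>I - J. c \<alpha> * G j \<alpha> x)"
            using JI finI by (metis (no_types, lifting) add.commute sum.subset_diff)
          also have "(\<Sum>\<alpha>\<in>J. c \<alpha> * G j \<alpha> x) = (\<Sum>k\<in>UNIV. v $ k * G j (\<sigma> k) x)"
            unfolding J_def by (simp add: sum.reindex[OF inj\<sigma>] c\<sigma>)
          also have "(\<Sum>\<alpha>\<in>I - J. c \<alpha> * G j \<alpha> x) = (\<Sum>\<alpha>\<in>I - J. w \<alpha> * G j \<alpha> x)"
            using cw by simp
          finally have "(\<Sum>k\<in>UNIV. v $ k * G j (\<sigma> k) x) = bb j x - (\<Sum>\<alpha>\<in>I - J. w \<alpha> * G j \<alpha> x)"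
            using eqs[of j] by simp
          then show ?thesis
            by (simp add: matrix_vector_mult_def Mat_def rr_def mult.commute)
        qed
        then show ?thesis by (simp add: vec_eq_iff)
      qed
      then have "v = h w x"
        using cramer[OF detnz[OF x(1)]] by (simp add: h_def)
      then show "v \<in> h w ` cball x0 r" using x(1) by blast
    qed
    have hd: "h w differentiable_on cball x0 r"
    proof (rule differentiable_at_imp_differentiable_on)
      fix x assume x: "x \<in> cball x0 r"
      have num: "(\<lambda>x. det (\<chi> i j. if j = k then rr w x $ i else Mat \<sigma> x $ i $ j)) differentiable (at x)" for k
      proof (rule det_differentiable)
        fix i j
        have "(\<lambda>x. bb i x - (\<Sum>\<alpha>\<in>I - J. w \<alpha> * G i \<alpha> x)) differentiable (at x)"
          using finI by (intro differentiable_diff differentiable_sum ballI differentiable_mult differentiable_const bd Gd) auto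
        then show "(\<lambda>x. if j = k then rr w x $ i else Mat \<sigma> x $ i $ j) differentiable (at x)"
          by (cases "j = k") (simp_all add: rr_def Mat_def Gd)
      qed
      have den: "(\<lambda>x. det (Mat \<sigma> x)) differentiable (at x)"
        unfolding Mat_def by (rule det_differentiable) (rule Gd)
      have "(\<lambda>x. h w x \<bullet> b) differentiable (at x)" if b: "b \<in> Basis" for b
      proof -
        obtain k where k: "b = axis k 1" using b by (auto simp: Basis_vec_def Basis_real_def)
        have "(\<lambda>x. h w x \<bullet> b) = (\<lambda>x. det (\<chi> i j. if j = k then rr w x $ i else Mat \<sigma> x $ i $ j) / det (Mat \<sigma> x))"
          by (simp add: k inner_axis h_def)
        then show ?thesis using num den detnz[OF x] by simp
      qed
      then show "h w differentiable (at x)"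
        using differentiable_componentwise_within by blast
    qed
    have "negligible (h w ` cball x0 r)"
      by (rule negligible_differentiable_image_lowdim[OF _ hd]) (use dimlt in simp)
    then have "negligible X" using Xsub negligible_subset by blast
    then have "X \<in> null_sets lborel"
      using Xsets by (simp add: negligible_iff_null_sets null_sets_completion_iff)
    then show ?thesis using em by (simp add: S_def null_sets_def)
  qed
  have "emeasure (PiM I (\<lambda>_. lborel)) N = emeasure (PiM ((I - J) \<union> J) (\<lambda>_. lborel)) N" by (simp only: IJ)
  also have "\<dots> = (\<integral>\<^sup>+w. emeasure (PiM J (\<lambda>_. lborel)) ((\<lambda>u. merge (I - J) J (w, u)) -` N \<inter> space (PiM J (\<lambda>_. lborel))) \<partial>PiM (I - J) (\<lambda>_. lborel))"
    using Nsets IJ finI finJ by (intro P.emeasure_fold_integral) auto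
  also have "\<dots> = (\<integral>\<^sup>+w. 0 \<partial>PiM (I - J) (\<lambda>_. lborel::real measure))"
    using slice0 by (intro nn_integral_cong) simp
  finally have "emeasure (PiM I (\<lambda>_. lborel)) N = 0" by simp
  then show ?thesis using Nsets by (simp add: N_def null_setsI)
qed

lemma bad_null:
  "\<exists>N \<in> null_sets (PiM I (\<lambda>_. lborel)).
     {c \<in> PiE I (\<lambda>_. UNIV). \<exists>x. (\<exists>\<sigma>. (\<forall>k. \<sigma> k \<in> I) \<and> inj \<sigma> \<and> det (Mat \<sigma> x) \<noteq> 0) \<and>
        (\<forall>j. (\<Sum>\<alpha>\<in>I. c \<alpha> * G j \<alpha> x) = bb j x)} \<subseteq> N"
proof -
  obtain Dn :: "'m set" where cD: "countable Dn" and dense: "\<And>U. open U \<Longrightarrow> U \<noteq> {} \<Longrightarrow> \<exists>d\<in>Dn. d \<in> U"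
    using countable_dense_exists by blast
  define \<F> where "\<F> = {ball x0 r | x0 r. \<exists>\<sigma>. (\<forall>k. \<sigma> k \<in> I) \<and> inj \<sigma> \<and> (\<forall>x\<in>cball x0 r. det (Mat \<sigma> x) \<noteq> 0)}"
  have "\<And>S. S \<in> \<F> \<Longrightarrow> open S" by (auto simp: \<F>_def)
  then obtain \<F>' where F': "\<F>' \<subseteq> \<F>" "countable \<F>'" "\<Union>\<F>' = \<Union>\<F>"
    using Lindelof by metis
  define N where "N = (\<Union>B\<in>\<F>'. NB Dn B)"
  have "N \<in> null_sets (PiM I (\<lambda>_. lborel))"
    unfolding N_def
  proof (rule null_sets_UN'[OF F'(2)])
    fix B assume "B \<in> \<F>'"
    then have "B \<in> \<F>" using F'(1) by blast
    then obtain x0 r \<sigma> where B: "B = ball x0 r" "\<forall>k. \<sigma> k \<in> I" "inj \<sigma>" "\<forall>x\<in>cball x0 r. det (Mat \<sigma> x) \<noteq> 0"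
      unfolding \<F>_def by blast
    show "NB Dn B \<in> null_sets (PiM I (\<lambda>_. lborel))"
      unfolding B(1) using B(2-4) cD by (intro NB_null) auto
  qed
  moreover have "{c \<in> PiE I (\<lambda>_. UNIV). \<exists>x. (\<exists>\<sigma>. (\<forall>k. \<sigma> k \<in> I) \<and> inj \<sigma> \<and> det (Mat \<sigma> x) \<noteq> 0) \<and>
        (\<forall>j. (\<Sum>\<alpha>\<in>I. c \<alpha> * G j \<alpha> x) = bb j x)} \<subseteq> N"
  proof safe
    fix c x \<sigma>
    assume c: "c \<in> PiE I (\<lambda>_. UNIV)" and \<sigma>: "\<forall>k. \<sigma> k \<in> I" "inj \<sigma>" "det (Mat \<sigma> x) \<noteq> 0"
      and eq: "\<forall>j. (\<Sum>\<alpha>\<in>I. c \<alpha> * G j \<alpha> x) = bb j x"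
    have "open {x. det (Mat \<sigma> x) \<noteq> 0}"
      by (rule open_Collect_neq) (auto intro: det_cont)
    then obtain e where e: "e > 0" "ball x e \<subseteq> {x. det (Mat \<sigma> x) \<noteq> 0}"
      using \<sigma>(3) open_contains_ball by blast
    have "cball x (e/2) \<subseteq> ball x e" using e(1) by (auto simp: subset_iff)
    then have "ball x (e/2) \<in> \<F>" using e \<sigma> unfolding \<F>_def by blast
    moreover have "x \<in> ball x (e/2)" using e(1) by simp
    ultimately have "x \<in> \<Union>\<F>'" using F'(3) by blast
    then obtain B where B: "B \<in> \<F>'" "x \<in> B" by blast
    have "open B" using B(1) F'(1) by (auto simp: \<F>_def)
    moreover have "gg x c = 0" using eq gg_zero_iff by blast
    ultimately have "c \<in> NB Dn B" using NB_sub[OF dense _ B(2) c] by blast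
    then show "c \<in> N" using B(1) by (auto simp: N_def)
  qed
  ultimately show ?thesis by blast
qed

end



lemma cnorm_L2: "cnorm I c = L2_set c I"
  by (simp add: cnorm_def L2_set_def)

lemma ball_sets:
  assumes "finite I"
  shows "{c \<in> PiE I (\<lambda>_. UNIV). cnorm I (\<lambda>\<alpha>. c \<alpha> - a \<alpha>) < \<epsilon>} \<in> sets (PiM I (\<lambda>_. lborel))"
proof -
  have "(\<lambda>c. cnorm I (\<lambda>\<alpha>. c \<alpha> - a \<alpha>)) \<in> borel_measurable (PiM I (\<lambda>_. lborel))"
    unfolding cnorm_def by measurable
  then have "{c \<in> space (PiM I (\<lambda>_. lborel)). cnorm I (\<lambda>\<alpha>. c \<alpha> - a \<alpha>) < \<epsilon>} \<in> sets (PiM I (\<lambda>_. lborel))"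
    by measurable
  then show ?thesis by (simp add: space_PiM)
qed

lemma ball_measure_pos:
  assumes finI: "finite I" and ne: "I \<noteq> {}" and eps: "\<epsilon> > 0"
  shows "measure (PiM I (\<lambda>_. lborel)) {c \<in> PiE I (\<lambda>_. UNIV). cnorm I (\<lambda>\<alpha>. c \<alpha> - a \<alpha>) < \<epsilon>} > 0"
proof -
  interpret P: product_sigma_finite "\<lambda>_::'a. lborel" by (rule psf_lborel)
  let ?M = "PiM I (\<lambda>_. lborel)"
  let ?B = "{c \<in> PiE I (\<lambda>_. UNIV). cnorm I (\<lambda>\<alpha>. c \<alpha> - a \<alpha>) < \<epsilon>}"
  define \<eta> where "\<eta> = \<epsilon> / real (card I)"
  have cardpos: "card I > 0" using finI ne by (simp add: card_gt_0_iff)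
  have \<eta>pos: "\<eta> > 0" using eps cardpos by (simp add: \<eta>_def)
  have small: "PiE I (\<lambda>\<alpha>. {a \<alpha> - \<eta> <..< a \<alpha> + \<eta>}) \<subseteq> ?B"
  proof
    fix c assume c: "c \<in> PiE I (\<lambda>\<alpha>. {a \<alpha> - \<eta> <..< a \<alpha> + \<eta>})"
    then have lt: "\<bar>c \<alpha> - a \<alpha>\<bar> < \<eta>" if "\<alpha> \<in> I" for \<alpha> using that by (auto simp: PiE_iff abs_less_iff)
    have "cnorm I (\<lambda>\<alpha>. c \<alpha> - a \<alpha>) \<le> (\<Sum>\<alpha>\<in>I. \<bar>c \<alpha> - a \<alpha>\<bar>)"
      unfolding cnorm_L2 by (rule L2_set_le_sum_abs)
    also have "\<dots> < (\<Sum>\<alpha>\<in>I. \<eta>)"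
      using lt finI ne by (intro sum_strict_mono) auto
    also have "\<dots> = \<epsilon>" using cardpos by (simp add: \<eta>_def)
    finally show "c \<in> ?B" using c by (auto simp: PiE_iff)
  qed
  have big: "?B \<subseteq> PiE I (\<lambda>\<alpha>. {a \<alpha> - \<epsilon> .. a \<alpha> + \<epsilon>})"
  proof
    fix c assume c: "c \<in> ?B"
    have "\<bar>c \<alpha> - a \<alpha>\<bar> \<le> \<epsilon>" if "\<alpha> \<in> I" for \<alpha>
    proof -
      have "\<bar>c \<alpha> - a \<alpha>\<bar> \<le> L2_set (\<lambda>\<alpha>. \<bar>c \<alpha> - a \<alpha>\<bar>) I"
        using finI that by (rule member_le_L2_set)
      also have "\<dots> = cnorm I (\<lambda>\<alpha>. c \<alpha> - a \<alpha>)" by (simp add: cnorm_L2 L2_set_def)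
      finally show ?thesis using c by simp
    qed
    then show "c \<in> PiE I (\<lambda>\<alpha>. {a \<alpha> - \<epsilon> .. a \<alpha> + \<epsilon>})" using c
      by (auto simp: PiE_iff abs_le_iff) (smt (verit))+
  qed
  have Bs: "?B \<in> sets ?M" by (rule ball_sets[OF finI])
  have "emeasure ?M (PiE I (\<lambda>\<alpha>. {a \<alpha> - \<eta> <..< a \<alpha> + \<eta>})) = (\<Prod>\<alpha>\<in>I. emeasure lborel {a \<alpha> - \<eta> <..< a \<alpha> + \<eta>})"
    using finI by (intro P.emeasure_PiM) auto
  also have "\<dots> = (\<Prod>\<alpha>\<in>I. ennreal (2 * \<eta>))" using \<eta>pos by simp
  also have "\<dots> = ennreal (2 * \<eta>) ^ card I" by simp
  also have "\<dots> = ennreal ((2 * \<eta>) ^ card I)" using \<eta>pos by (intro ennreal_power) simp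
  finally have e1: "emeasure ?M (PiE I (\<lambda>\<alpha>. {a \<alpha> - \<eta> <..< a \<alpha> + \<eta>})) > 0"
    using \<eta>pos by simp
  have "emeasure ?M (PiE I (\<lambda>\<alpha>. {a \<alpha> - \<epsilon> .. a \<alpha> + \<epsilon>})) = (\<Prod>\<alpha>\<in>I. emeasure lborel {a \<alpha> - \<epsilon> .. a \<alpha> + \<epsilon>})"
    using finI by (intro P.emeasure_PiM) auto
  also have "\<dots> = (\<Prod>\<alpha>\<in>I. ennreal (2 * \<epsilon>))" using eps by simp
  also have "\<dots> = ennreal (2 * \<epsilon>) ^ card I" by simp
  also have "\<dots> = ennreal ((2 * \<epsilon>) ^ card I)" using eps by (intro ennreal_power) simp
  finally have e2: "emeasure ?M (PiE I (\<lambda>\<alpha>. {a \<alpha> - \<epsilon> .. a \<alpha> + \<epsilon>})) < \<infinity>"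
    by simp
  have pos: "emeasure ?M ?B > 0"
    using e1 emeasure_mono[OF small Bs] by simp
  have bigs: "PiE I (\<lambda>\<alpha>. {a \<alpha> - \<epsilon> .. a \<alpha> + \<epsilon>}) \<in> sets ?M"
    using finI by (intro sets_PiM_I_finite) auto
  have fin: "emeasure ?M ?B < \<infinity>"
    using e2 emeasure_mono[OF big bigs] by (meson le_less_trans)
  show ?thesis
    using pos fin by (simp add: measure_def enn2real_positive_iff)
qed



lemma proj1_add: "proj1 (u + v) = proj1 u + proj1 v"
  by (simp add: proj1_def)

lemma proj1_scaleR: "proj1 (t *\<^sub>R v) = t * proj1 v"
  by (simp add: proj1_def)

lemma proj1_e1: "proj1 (e1 :: (real,'n::{finite,wellorder}) vec) = 1"
  by (simp add: proj1_def e1_def)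

lemma proj1_diff: "(proj1 :: (real,'n::{finite,wellorder}) vec \<Rightarrow> real) differentiable (at x)"
proof -
  have "bounded_linear (\<lambda>x::(real,'n) vec. x $ first_idx)" by (rule bounded_linear_vec_nth)
  then show ?thesis unfolding proj1_def[abs_def] by (rule bounded_linear_imp_differentiable)
qed

lemma monom_diff: "monom \<alpha> differentiable (at (x::(real,'n::finite) vec))"
proof -
  have "(\<lambda>x::(real,'n) vec. \<Prod>i\<in>UNIV. (x $ i) ^ (\<alpha> i)) differentiable (at x)"
  proof (rule differentiable_prod_at)
    fix i
    have "(\<lambda>x::(real,'n) vec. x $ i) differentiable (at x)"
      by (rule bounded_linear_imp_differentiable) (rule bounded_linear_vec_nth)
    then show "(\<lambda>x::(real,'n) vec. x $ i ^ \<alpha> i) differentiable (at x)" by (rule differentiable_power)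
  qed
  then show ?thesis unfolding monom_def[abs_def] .
qed

lemma funpow_diff:
  fixes f :: "'a::real_normed_vector \<Rightarrow> 'a"
  assumes "\<And>x. f differentiable (at x)"
  shows "(f ^^ n) differentiable (at x)"
proof (induction n arbitrary: x)
  case 0
  have "(\<lambda>x. x) differentiable (at x)" by (rule differentiable_ident)
  then show ?case by (simp add: id_def)
next
  case (Suc n)
  have "(f \<circ> (f ^^ n)) differentiable (at x)"
    by (rule differentiable_chain_at[OF Suc.IH assms])
  then show ?case by (simp add: o_def)
qed

lemma Ck1_diff: "Ck 1 f \<Longrightarrow> f differentiable (at x)"
  by simp

lemma phi_c_proj1:
  "proj1 (phi_c D \<phi> c y) = proj1 (\<phi> y) + (\<Sum>\<alpha>\<in>multi_idx (2*D-1). c \<alpha> * monom \<alpha> y)"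
  by (simp add: phi_c_def proj1_add proj1_scaleR proj1_e1)

lemma orbit_psi:
  fixes \<phi> :: "(real,'n::{finite,wellorder}) vec \<Rightarrow> (real,'n) vec" and D :: nat and c :: "('n \<Rightarrow> nat) \<Rightarrow> real"
  defines "f \<equiv> phi_c D \<phi> c"
    and "\<psi> \<equiv> \<lambda>y. \<phi> y + (proj1 y - proj1 (\<phi> y)) *\<^sub>R e1"
  assumes eq: "\<And>j. j < D \<Longrightarrow> proj1 ((f ^^ j) x) = proj1 ((f ^^ Suc j) x)"
  shows "j \<le> D \<Longrightarrow> (f ^^ j) x = (\<psi> ^^ j) x"
    and "j < D \<Longrightarrow> (\<Sum>\<alpha>\<in>multi_idx (2*D-1). c \<alpha> * monom \<alpha> ((\<psi> ^^ j) x)) = proj1 ((\<psi> ^^ j) x) - proj1 (\<phi> ((\<psi> ^^ j) x))"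
proof -
  have step: "(\<Sum>\<alpha>\<in>multi_idx (2*D-1). c \<alpha> * monom \<alpha> ((f ^^ j) x)) = proj1 ((f ^^ j) x) - proj1 (\<phi> ((f ^^ j) x))"
    and step2: "(f ^^ Suc j) x = \<psi> ((f ^^ j) x)" if j: "j < D" for j
  proof -
    have "proj1 ((f ^^ Suc j) x) = proj1 (\<phi> ((f ^^ j) x)) + (\<Sum>\<alpha>\<in>multi_idx (2*D-1). c \<alpha> * monom \<alpha> ((f ^^ j) x))"
      by (simp add: f_def phi_c_proj1)
    then show s: "(\<Sum>\<alpha>\<in>multi_idx (2*D-1). c \<alpha> * monom \<alpha> ((f ^^ j) x)) = proj1 ((f ^^ j) x) - proj1 (\<phi> ((f ^^ j) x))"
      using eq[OF j] by simp
    show "(f ^^ Suc j) x = \<psi> ((f ^^ j) x)"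
      using s by (simp add: f_def phi_c_def \<psi>_def)
  qed
  show fj: "(f ^^ j) x = (\<psi> ^^ j) x" if "j \<le> D" for j
    using that
  proof (induction j)
    case 0
    then show ?case by simp
  next
    case (Suc j)
    then show ?case using step2[of j] by simp
  qed
  show "(\<Sum>\<alpha>\<in>multi_idx (2*D-1). c \<alpha> * monom \<alpha> ((\<psi> ^^ j) x)) = proj1 ((\<psi> ^^ j) x) - proj1 (\<phi> ((\<psi> ^^ j) x))"
    if "j < D" using step[OF that] fj[of j] that by simp
qed



lemma reduction_null:
  fixes \<phi> :: "(real,'n::{finite,wellorder}) vec \<Rightarrow> (real,'n) vec"
    and D m :: nat and a0 \<delta> :: real and K :: "(real,'n) vec set"
    and \<xi> :: "nat \<Rightarrow> (('n \<Rightarrow> nat) \<Rightarrow> real) \<Rightarrow> (real,'n) vec"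
  defines "I \<equiv> multi_idx (2*D-1) :: ('n \<Rightarrow> nat) set"
  assumes diffeo: "diffeo_Ck 1 \<phi>"
    and Dge: "D \<ge> 2 * CARD('n) + 1"
    and C3: "\<forall>c\<in>param_space D. cnorm I c \<le> a0 \<longrightarrow> diffeo_Ck 3 (phi_c D \<phi> c)"
    and fixpts: "\<forall>c\<in>param_space D. cnorm I c \<le> a0 \<longrightarrow>
                   {x. phi_c D \<phi> c x = x} = (\<lambda>i. \<xi> i c) ` {1..m} \<and> inj_on (\<lambda>i. \<xi> i c) {1..m}"
    and noper: "\<forall>c\<in>param_space D. cnorm I c \<le> a0 \<longrightarrow>
                  (\<forall>x. \<forall>n. 1 \<le> n \<and> n < 2*D \<and> (phi_c D \<phi> c ^^ n) x = x \<longrightarrow> phi_c D \<phi> c x = x)"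
    and \<delta>pos: "0 < \<delta>"
  shows "\<exists>N\<in>null_sets (PiM I (\<lambda>_. lborel)).
           {c \<in> param_space D. cnorm I c < a0 \<and> (\<exists>x1\<in>K. (\<forall>j\<in>{1..m}. norm (x1 - \<xi> j c) \<ge> 3 * \<delta>) \<and>
               delay_map D \<phi> c x1 = delay_map D \<phi> c (phi_c D \<phi> c x1))} \<subseteq> N"
proof -
  have finI: "finite I" by (simp add: I_def finite_multi_idx)
  have psI: "param_space D = PiE I (\<lambda>_. UNIV)" by (simp add: param_space_def I_def)
  have \<phi>d: "\<And>x. \<phi> differentiable (at x)" using diffeo by (simp add: diffeo_Ck_def)
  define \<psi> where "\<psi> = (\<lambda>y. \<phi> y + (proj1 y - proj1 (\<phi> y)) *\<^sub>R e1)"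
  have \<psi>d: "\<psi> differentiable (at x)" for x
  proof -
    have p: "(\<lambda>y. proj1 (\<phi> y)) differentiable (at x)"
      by (rule differentiable_compose[OF proj1_diff \<phi>d])
    show ?thesis unfolding \<psi>_def
      by (intro differentiable_add differentiable_scaleR differentiable_diff \<phi>d proj1_diff p differentiable_const)
  qed
  have \<psi>nd: "(\<psi> ^^ n) differentiable (at x)" for n x by (rule funpow_diff[OF \<psi>d])
  obtain idx :: "'n option \<Rightarrow> nat" where idx: "bij_betw idx (UNIV::'n option set) {0..<CARD('n option)}"
    using ex_bij_betw_finite_nat[of "UNIV::'n option set"] by auto
  have idxlt: "idx j < CARD('n option)" for j using idx by (auto simp: bij_betw_def)
  have injidx: "inj idx" using idx by (simp add: bij_betw_def)
  have cardopt: "CARD('n option) = CARD('n) + 1" by (simp add: card_UNIV_option)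
  have dD: "CARD('n option) \<le> D" using Dge cardopt by simp
  define G where "G j \<alpha> x = monom \<alpha> ((\<psi> ^^ idx j) x)" for j :: "'n option" and \<alpha> and x
  define bb where "bb j x = proj1 ((\<psi> ^^ idx j) x) - proj1 (\<phi> ((\<psi> ^^ idx j) x))" for j :: "'n option" and x
  interpret core_setup G bb I
  proof
    show "finite I" by (rule finI)
    show "DIM((real,'n) vec) < CARD('n option)" using cardopt by simp
    show "G j \<alpha> differentiable (at x)" for j \<alpha> x
      unfolding G_def by (rule differentiable_compose[OF monom_diff \<psi>nd])
    show "bb j differentiable (at x)" for j x
      unfolding bb_def
      by (intro differentiable_diff differentiable_compose[OF proj1_diff \<psi>nd]
            differentiable_compose[OF proj1_diff differentiable_compose[OF \<phi>d \<psi>nd]])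
  qed
  obtain N where N: "N \<in> null_sets (PiM I (\<lambda>_. lborel))"
    and Nsub: "{c \<in> PiE I (\<lambda>_. UNIV). \<exists>x. (\<exists>\<sigma>. (\<forall>k. \<sigma> k \<in> I) \<and> inj \<sigma> \<and> det (Mat \<sigma> x) \<noteq> 0) \<and>
        (\<forall>j. (\<Sum>\<alpha>\<in>I. c \<alpha> * G j \<alpha> x) = bb j x)} \<subseteq> N"
    using bad_null by blast
  have "{c \<in> param_space D. cnorm I c < a0 \<and> (\<exists>x1\<in>K. (\<forall>j\<in>{1..m}. norm (x1 - \<xi> j c) \<ge> 3 * \<delta>) \<and>
               delay_map D \<phi> c x1 = delay_map D \<phi> c (phi_c D \<phi> c x1))} \<subseteq> N"
  proof
    fix c assume "c \<in> {c \<in> param_space D. cnorm I c < a0 \<and> (\<exists>x1\<in>K. (\<forall>j\<in>{1..m}. norm (x1 - \<xi> j c) \<ge> 3 * \<delta>) \<and>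
               delay_map D \<phi> c x1 = delay_map D \<phi> c (phi_c D \<phi> c x1))}"
    then obtain x1 where cps: "c \<in> param_space D" and cn: "cnorm I c < a0"
      and far: "\<forall>j\<in>{1..m}. norm (x1 - \<xi> j c) \<ge> 3 * \<delta>"
      and deq: "delay_map D \<phi> c x1 = delay_map D \<phi> c (phi_c D \<phi> c x1)" by blast
    have cle: "cnorm I c \<le> a0" using cn by simp
    define f where "f = phi_c D \<phi> c"
    have bijf: "bij f" using C3 cps cle by (simp add: diffeo_Ck_def f_def)
    have injf: "inj f" using bijf bij_is_inj by blast
    have notfix: "f x1 \<noteq> x1"
    proof
      assume "f x1 = x1"
      then have "x1 \<in> (\<lambda>i. \<xi> i c) ` {1..m}" using fixpts cps cle by (auto simp: f_def)
      then obtain i where "i \<in> {1..m}" "x1 = \<xi> i c" by blast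
      then show False using far \<delta>pos by force
    qed
    have eq: "proj1 ((f ^^ j) x1) = proj1 ((f ^^ Suc j) x1)" if "j < D" for j
    proof -
      have "map (\<lambda>j. proj1 ((f ^^ j) x1)) [0..<D] = map (\<lambda>j. proj1 ((f ^^ j) (f x1))) [0..<D]"
        using deq by (simp add: delay_map_def f_def)
      then have "proj1 ((f ^^ j) x1) = proj1 ((f ^^ j) (f x1))"
        using that by (simp add: map_eq_conv)
      then show ?thesis by (simp add: funpow_swap1)
    qed
    have orb: "(f ^^ j) x1 = (\<psi> ^^ j) x1" if "j \<le> D" for j
      using orbit_psi(1)[of D \<phi> c x1 j] eq that unfolding f_def \<psi>_def by blast
    have eqn: "(\<Sum>\<alpha>\<in>I. c \<alpha> * monom \<alpha> ((\<psi> ^^ j) x1)) = proj1 ((\<psi> ^^ j) x1) - proj1 (\<phi> ((\<psi> ^^ j) x1))"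
      if "j < D" for j
      using orbit_psi(2)[of D \<phi> c x1 j] eq that unfolding f_def \<psi>_def I_def by blast
    define z where "z j = (\<psi> ^^ idx j) x1" for j
    have injz: "inj z"
    proof (rule injI)
      fix i j assume zij: "z i = z j"
      have key: False if ab: "idx a < idx b" and zab: "z a = z b" for a b
      proof -
        have bD: "idx b \<le> D" using idxlt[of b] dD by simp
        have aD: "idx a \<le> D" using idxlt[of a] dD by simp
        have "(f ^^ idx a) x1 = (f ^^ idx b) x1" using zab orb[OF aD] orb[OF bD] by (simp add: z_def)
        also have "(f ^^ idx b) x1 = (f ^^ idx a) ((f ^^ (idx b - idx a)) x1)"
          using ab by (metis funpow_add comp_apply le_add_diff_inverse less_imp_le)
        finally have "(f ^^ (idx b - idx a)) x1 = x1"
          using inj_fn[OF injf, of "idx a"] by (metis injD)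
        moreover have "1 \<le> idx b - idx a" "idx b - idx a < 2 * D" using ab bD by auto
        ultimately have "f x1 = x1" using noper cps cle unfolding f_def by blast
        then show False using notfix by simp
      qed
      have "idx i = idx j"
      proof (rule ccontr)
        assume "idx i \<noteq> idx j"
        then consider "idx i < idx j" | "idx j < idx i" by linarith
        then show False using key zij by metis
      qed
      then show "i = j" using injidx by (simp add: inj_eq)
    qed
    have cardK: "CARD('n option) \<le> Suc (2*D-1)" using dD by simp
    define col where "col \<alpha> = (\<chi> j. G j \<alpha> x1)" for \<alpha>
    have ax: "axis j0 1 \<in> span (col ` I)" for j0
    proof -
      obtain c' where c': "\<And>j. (\<Sum>\<alpha>\<in>multi_idx (2*D-1). c' \<alpha> * monom \<alpha> (z j)) = (if j = j0 then 1 else 0)"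
        using lagrange_exists[OF injz cardK, of j0] by blast
      have "axis j0 1 = (\<Sum>\<alpha>\<in>I. c' \<alpha> *\<^sub>R col \<alpha>)"
      proof (subst vec_eq_iff, rule allI)
        fix j
        have "(\<Sum>\<alpha>\<in>I. c' \<alpha> *\<^sub>R col \<alpha>) $ j = (\<Sum>\<alpha>\<in>I. c' \<alpha> * monom \<alpha> (z j))"
          by (simp add: sum_component col_def G_def z_def)
        also have "\<dots> = (if j = j0 then 1 else 0)" using c'[of j] by (simp add: I_def)
        finally show "axis j0 1 $ j = (\<Sum>\<alpha>\<in>I. c' \<alpha> *\<^sub>R col \<alpha>) $ j" by (simp add: axis_def)
      qed
      also have "\<dots> \<in> span (col ` I)"
        by (intro span_sum span_scale span_base) auto
      finally show ?thesis .
    qed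
    obtain \<sigma> where \<sigma>: "\<forall>k. \<sigma> k \<in> I" "inj \<sigma>" "det (\<chi> j k. col (\<sigma> k) $ j) \<noteq> 0"
      using span_cols_det[OF finI ax] by blast
    have "det (Mat \<sigma> x1) \<noteq> 0" using \<sigma>(3) by (simp add: Mat_def col_def)
    moreover have "(\<Sum>\<alpha>\<in>I. c \<alpha> * G j \<alpha> x1) = bb j x1" for j
      using eqn[of "idx j"] idxlt[of j] dD by (simp add: G_def bb_def)
    moreover have "c \<in> PiE I (\<lambda>_. UNIV)" using cps psI by simp
    ultimately show "c \<in> N" using Nsub \<sigma>(1,2) by blast
  qed
  then show ?thesis using N by blast
qed



theorem lemma16:
  fixes \<phi> :: "(real,'n::{finite,wellorder}) vec \<Rightarrow> (real,'n) vec"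
    and D m :: nat and r R a0 \<delta> :: real and y :: "(real,'n) vec"
    and \<xi> :: "nat \<Rightarrow> (('n \<Rightarrow> nat) \<Rightarrow> real) \<Rightarrow> (real,'n) vec"
  defines "I \<equiv> multi_idx (2*D-1) :: ('n \<Rightarrow> nat) set"
    and "K \<equiv> cball (0::(real,'n) vec) r"
    and "Kp \<equiv> cball y R"
  assumes diffeo: "diffeo_Ck 1 \<phi>"
    and Dge: "D \<ge> 2 * CARD('n) + 1"
    and rpos: "r > 0" and KKp: "K \<subseteq> Kp"
    and Kp_orbit: "\<forall>x\<in>K. \<forall>j\<le>D-1. (\<phi> ^^ j) x \<in> Kp"
    and a0pos: "a0 > 0"
    and Kp_orbit_c: "\<forall>c\<in>param_space D. cnorm I c \<le> a0 \<longrightarrow>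
                        (\<forall>x\<in>K. \<forall>j\<le>D-1. (phi_c D \<phi> c ^^ j) x \<in> Kp)"
    and C3: "\<forall>c\<in>param_space D. cnorm I c \<le> a0 \<longrightarrow> diffeo_Ck 3 (phi_c D \<phi> c)"
    and fixpts: "\<forall>c\<in>param_space D. cnorm I c \<le> a0 \<longrightarrow>
                   {x. phi_c D \<phi> c x = x} = (\<lambda>i. \<xi> i c) ` {1..m} \<and> inj_on (\<lambda>i. \<xi> i c) {1..m}"
    and noper: "\<forall>c\<in>param_space D. cnorm I c \<le> a0 \<longrightarrow>
                  (\<forall>x. \<forall>n. 1 \<le> n \<and> n < 2*D \<and> (phi_c D \<phi> c ^^ n) x = x \<longrightarrow> phi_c D \<phi> c x = x)"
    and hyp: "\<forall>c\<in>param_space D. cnorm I c \<le> a0 \<longrightarrow>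
                (\<forall>i\<in>{1..m}. hyperbolic_fp (phi_c D \<phi> c) (\<xi> i c))"
    and proj_distinct: "\<forall>c\<in>param_space D. cnorm I c \<le> a0 \<longrightarrow>
                (\<forall>i\<in>{1..m}. \<forall>j\<in>{1..m}. i \<noteq> j \<longrightarrow> proj1 (\<xi> i c) \<noteq> proj1 (\<xi> j c))"
    and immersive: "\<forall>c\<in>param_space D. cnorm I c \<le> a0 \<longrightarrow>
                (\<forall>i\<in>{1..m}. immersive_at D \<phi> c (\<xi> i c))"
    and \<delta>pos: "0 < \<delta>"
    and \<delta>small: "ereal \<delta> < fp_min_dist D a0 K m \<xi> / 3"
  shows "let A = {c \<in> param_space D. cnorm I c < a0 \<and>
                   (\<forall>x1\<in>K. (\<forall>j\<in>{1..m}. norm (x1 - \<xi> j c) \<ge> 3 * \<delta>) \<longrightarrow>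
                       delay_map D \<phi> c x1 \<noteq> delay_map D \<phi> c (phi_c D \<phi> c x1))};
             B = {c \<in> param_space D. cnorm I c < a0}
         in (\<forall>a\<in>B. lebesgue_point D A a) \<and> rel_prob D A B = 1"
proof -
  have finI: "finite I" by (simp add: I_def finite_multi_idx)
  have Ine: "I \<noteq> {}"
  proof -
    have "(\<lambda>_. 0::nat) \<in> I" by (simp add: I_def multi_idx_def)
    then show ?thesis by blast
  qed
  have lebI: "leb_param D = completion (PiM I (\<lambda>_. lborel))" by (simp add: leb_param_def I_def)
  have psI: "param_space D = PiE I (\<lambda>_. UNIV)" by (simp add: param_space_def I_def)
  have cb: "cball_open D a \<epsilon> = {c \<in> PiE I (\<lambda>_. UNIV). cnorm I (\<lambda>\<alpha>. c \<alpha> - a \<alpha>) < \<epsilon>}" for a \<epsilon>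
    by (simp add: cball_open_def param_space_def I_def)
  define A where "A = {c \<in> param_space D. cnorm I c < a0 \<and>
                   (\<forall>x1\<in>K. (\<forall>j\<in>{1..m}. norm (x1 - \<xi> j c) \<ge> 3 * \<delta>) \<longrightarrow>
                       delay_map D \<phi> c x1 \<noteq> delay_map D \<phi> c (phi_c D \<phi> c x1))}"
  define B where "B = {c \<in> param_space D. cnorm I c < a0}"
  obtain N where N: "N \<in> null_sets (PiM I (\<lambda>_. lborel))"
    and Nsub: "{c \<in> param_space D. cnorm I c < a0 \<and> (\<exists>x1\<in>K. (\<forall>j\<in>{1..m}. norm (x1 - \<xi> j c) \<ge> 3 * \<delta>) \<and>
               delay_map D \<phi> c x1 = delay_map D \<phi> c (phi_c D \<phi> c x1))} \<subseteq> N"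
    using reduction_null[OF diffeo Dge C3[unfolded I_def] fixpts[unfolded I_def] noper[unfolded I_def] \<delta>pos, of K]
    unfolding I_def by blast
  have BA: "B - A \<subseteq> N" using Nsub by (auto simp: A_def B_def)
  have key: "measure (leb_param D) (A \<inter> Y) = measure (PiM I (\<lambda>_. lborel)) Y"
    and key2: "measure (leb_param D) Y = measure (PiM I (\<lambda>_. lborel)) Y"
    if Y: "Y \<in> sets (PiM I (\<lambda>_. lborel))" "Y \<subseteq> B" for Y
  proof -
    have "Y - A \<in> null_sets (completion (PiM I (\<lambda>_. lborel)))"
      using BA Y(2) by (intro null_sets_completion_subset[OF _ null_sets_completionI[OF N]]) auto
    moreover have "A \<inter> Y = Y - (Y - A)" by auto
    ultimately have "measure (completion (PiM I (\<lambda>_. lborel))) (A \<inter> Y) = measure (completion (PiM I (\<lambda>_. lborel))) Y"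
      using Y(1) by (simp add: measure_Diff_null_set)
    then show "measure (leb_param D) (A \<inter> Y) = measure (PiM I (\<lambda>_. lborel)) Y"
      using Y(1) by (simp add: lebI)
    show "measure (leb_param D) Y = measure (PiM I (\<lambda>_. lborel)) Y"
      using Y(1) by (simp add: lebI)
  qed
  have lp: "lebesgue_point D A a" if a: "a \<in> B" for a
  proof -
    have an: "cnorm I a < a0" using a by (simp add: B_def)
    have "eventually (\<lambda>\<epsilon>. measure (leb_param D) (A \<inter> cball_open D a \<epsilon>) / measure (leb_param D) (cball_open D a \<epsilon>) = 1) (at_right 0)"
      unfolding eventually_at_right_field
    proof (intro exI[of _ "a0 - cnorm I a"] conjI allI impI)
      show "0 < a0 - cnorm I a" using an by simp
      fix \<epsilon> :: real assume e: "0 < \<epsilon>" "\<epsilon> < a0 - cnorm I a"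
      let ?Y = "cball_open D a \<epsilon>"
      have Ys: "?Y \<in> sets (PiM I (\<lambda>_. lborel))" unfolding cb by (rule ball_sets[OF finI])
      have YB: "?Y \<subseteq> B"
      proof
        fix c assume c: "c \<in> ?Y"
        have "cnorm I c = L2_set (\<lambda>\<alpha>. (c \<alpha> - a \<alpha>) + a \<alpha>) I" by (simp add: cnorm_L2)
        also have "\<dots> \<le> L2_set (\<lambda>\<alpha>. c \<alpha> - a \<alpha>) I + L2_set a I" by (rule L2_set_triangle_ineq)
        also have "\<dots> < a0" using c e by (simp add: cb cnorm_L2)
        finally show "c \<in> B" using c by (simp add: cb B_def psI)
      qed
      have pos: "measure (PiM I (\<lambda>_. lborel)) ?Y > 0"
        unfolding cb by (rule ball_measure_pos[OF finI Ine e(1)])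
      show "measure (leb_param D) (A \<inter> ?Y) / measure (leb_param D) ?Y = 1"
        using key[OF Ys YB] key2[OF Ys YB] pos by simp
    qed
    then show ?thesis unfolding lebesgue_point_def by (rule tendsto_eventually)
  qed
  have Bb: "B = cball_open D (\<lambda>_. 0) a0" by (simp add: cb B_def psI)
  have Bs: "B \<in> sets (PiM I (\<lambda>_. lborel))" unfolding Bb cb by (rule ball_sets[OF finI])
  have Bpos: "measure (PiM I (\<lambda>_. lborel)) B > 0"
    unfolding Bb cb by (rule ball_measure_pos[OF finI Ine a0pos])
  have rp: "rel_prob D A B = 1"
    using key[OF Bs order_refl] key2[OF Bs order_refl] Bpos by (simp add: rel_prob_def)
  have "(\<forall>a\<in>B. lebesgue_point D A a) \<and> rel_prob D A B = 1" using lp rp by blast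
  then show ?thesis unfolding Let_def A_def B_def .
qed


end
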